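(* Let $C:I\to\mathbb R^n$ be a smooth homotopy such that every curve $\theta\mapsto C(\theta,v)$ is immersed. Then for every $v\in[0,1]$ $$\frac{d}{dv}\sqrt{\mathrm{len}(C)(v)}\le\frac12\Big(\int_{S^1}\langle H,\partial_vC\rangle^2|\partial_\theta C|\,d\theta\Big)^{1/2},$$ and consequently for all $0\le v'<v''\le1$ $$\sqrt{\mathrm{len}(C)(v'')}-\sqrt{\mathrm{len}(C)(v')}\le\frac{\sqrt{J(C)}}{2}\sqrt{v''-v'} .$$ In particular $\sqrt{\mathrm{len}(C)}$ is Hölder continuous of exponent $1/2$ when $J(C)<\infty$.
   Context: $S^1=\mathbb R/2\pi\mathbb Z$, $I=S^1\times[0,1]$. $\mathrm{len}(C)(v)=\int_{S^1}|\partial_\theta C(\theta,v)|\,d\theta$. $T=\partial_\theta C/|\partial_\theta C|$, $H=\frac1{|\partial_\theta C|}\partial_\theta T$ (curvature vector), $\pi_Nw=w-\langle w,T\rangle T$, and $J(C)=\int_I|H|^2|\pi_N\partial_vC|^2|\partial_\theta C|\,d\theta\,dv$. *)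

theory Defs
  imports "HOL-Analysis.Analysis"
begin

text \<open>C-infinity smoothness on an open set: all iterated Frechet derivatives exist.
  D ds x is the iterated derivative in the directions of the list ds, evaluated at x.\<close>
definition smooth_on :: "'a::real_normed_vector set \<Rightarrow> ('a \<Rightarrow> 'b::real_normed_vector) \<Rightarrow> bool" where
  "smooth_on U f \<longleftrightarrow> open U \<and>
     (\<exists>D :: 'a list \<Rightarrow> 'a \<Rightarrow> 'b. D [] = f \<and>
        (\<forall>ds. \<forall>x\<in>U. (D ds has_derivative (\<lambda>h. D (h # ds) x)) (at x)))"

text \<open>A homotopy C(theta, v), theta in S^1 represented as 2pi-periodic in the first argument.\<close>

definition dth :: "(real \<times> real \<Rightarrow> 'a::real_normed_vector) \<Rightarrow> real \<Rightarrow> real \<Rightarrow> 'a" where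
  "dth C \<theta> v = vector_derivative (\<lambda>t. C (t, v)) (at \<theta>)"

definition dv :: "(real \<times> real \<Rightarrow> 'a::real_normed_vector) \<Rightarrow> real \<Rightarrow> real \<Rightarrow> 'a" where
  "dv C \<theta> v = vector_derivative (\<lambda>s. C (\<theta>, s)) (at v)"

definition len :: "(real \<times> real \<Rightarrow> 'a::real_normed_vector) \<Rightarrow> real \<Rightarrow> real" where
  "len C v = integral {0..2*pi} (\<lambda>\<theta>. norm (dth C \<theta> v))"

definition tangent :: "(real \<times> real \<Rightarrow> 'a::real_normed_vector) \<Rightarrow> real \<Rightarrow> real \<Rightarrow> 'a" where
  "tangent C \<theta> v = (1 / norm (dth C \<theta> v)) *\<^sub>R dth C \<theta> v"

definition curv :: "(real \<times> real \<Rightarrow> 'a::real_normed_vector) \<Rightarrow> real \<Rightarrow> real \<Rightarrow> 'a" where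
  "curv C \<theta> v = (1 / norm (dth C \<theta> v)) *\<^sub>R vector_derivative (\<lambda>t. tangent C t v) (at \<theta>)"

definition normal_proj :: "(real \<times> real \<Rightarrow> 'a::real_inner) \<Rightarrow> real \<Rightarrow> real \<Rightarrow> 'a \<Rightarrow> 'a" where
  "normal_proj C \<theta> v w = w - (inner w (tangent C \<theta> v)) *\<^sub>R tangent C \<theta> v"

definition Jfun :: "(real \<times> real \<Rightarrow> 'a::real_inner) \<Rightarrow> real" where
  "Jfun C = integral ({0..2*pi} \<times> {0..1})
     (\<lambda>(\<theta>, v). (norm (curv C \<theta> v))\<^sup>2 * (norm (normal_proj C \<theta> v (dv C \<theta> v)))\<^sup>2
                 * norm (dth C \<theta> v))"

end

theory Submission
  imports Defs
begin



lemma amgm_sqrt: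
  fixes x a b :: real
  assumes H: "\<And>l. l > 0 \<Longrightarrow> x \<le> (l*a + b/l)/2" and a: "a \<ge> 0" and b: "b \<ge> 0"
  shows "x \<le> sqrt (a*b)"
proof (cases "a > 0 \<and> b > 0")
  case True
  define l where "l = sqrt b / sqrt a"
  have l: "l > 0" using True by (simp add: l_def)
  have "l * a = sqrt b * (a / sqrt a)" by (simp add: l_def)
  also have "a / sqrt a = sqrt a" using True by (simp add: real_div_sqrt)
  finally have la: "l * a = sqrt a * sqrt b" by simp
  have "b / l = sqrt a * (b / sqrt b)" by (simp add: l_def)
  also have "b / sqrt b = sqrt b" using True by (simp add: real_div_sqrt)
  finally have lb: "b / l = sqrt a * sqrt b" by simp
  show ?thesis using H[OF l] la lb by (simp add: real_sqrt_mult)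
next
  case False
  show ?thesis
  proof (rule ccontr)
    assume nx: "\<not> x \<le> sqrt (a*b)"
    have ab0: "a*b = 0" using False a b by auto
    have x0: "x > 0" using nx ab0 by auto
    show False
    proof (cases "a = 0")
      case True
      have "b/x \<ge> 0" using x0 b by simp
      hence pos: "b/x + 1 > 0" by linarith
      have "x \<le> ((b/x+1)*a + b/(b/x+1))/2" using H[OF pos] .
      hence "x \<le> (b/(b/x+1))/2" using True by simp
      moreover have "b/(b/x+1) < 2*x"
      proof -
        have "2*x*(b/x+1) = 2*b + 2*x" using x0 by (simp add: field_simps)
        hence "b < 2*x*(b/x+1)" using x0 b by linarith
        thus ?thesis using pos by (simp add: divide_less_eq)
      qed
      moreover have "\<And>y. x \<le> y/2 \<Longrightarrow> y < 2*x \<Longrightarrow> False" by linarith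
      ultimately show False by blast
    next
      case False
      hence ap: "a > 0" and b0: "b = 0" using a ab0 by auto
      have "x \<le> ((x/a)*a)/2" using H[of "x/a"] x0 ap b0 by simp
      thus False using x0 ap by simp
    qed
  qed
qed

lemma holder_gen:
  fixes \<phi> d g :: "real \<Rightarrow> real"
  assumes der: "\<And>v. v \<in> {0..1} \<Longrightarrow> (\<phi> has_real_derivative d v) (at v within {0..1})"
    and bd: "\<And>v. v \<in> {0..1} \<Longrightarrow> d v \<le> sqrt (g v) / 2"
    and gc: "continuous_on {0..1} g" and gnn: "\<And>v. v \<in> {0..1} \<Longrightarrow> g v \<ge> 0"
    and ab: "0 \<le> a" "a < b" "b \<le> 1"
  shows "\<phi> b - \<phi> a \<le> sqrt (integral {0..1} g) / 2 * sqrt (b - a)"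
proof -
  define I where "I = integral {a..b} g"
  have gcab: "continuous_on {a..b} g" by (rule continuous_on_subset[OF gc]) (use ab in auto)
  have II: "I \<le> integral {0..1} g" unfolding I_def
    apply (rule integral_subset_le)
    using ab gnn gc gcab by (auto intro: integrable_continuous_real)
  have I0: "I \<ge> 0" unfolding I_def using ab gnn by (auto intro!: integral_nonneg integrable_continuous_real gcab)
  have key: "2*(\<phi> b - \<phi> a) \<le> (l*I + (b-a)/l)/2" if l: "l > 0" for l
  proof -
    define \<psi> where "\<psi> v = \<phi> v - (l * integral {a..v} g + v/l)/4" for v
    have dpsi: "(\<psi> has_real_derivative (d v - (l * g v + 1/l)/4)) (at v within {a..b})"
      if v: "v \<in> {a..b}" for v
    proof -
      have "(\<phi> has_real_derivative d v) (at v within {a..b})"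
        using der[of v] v ab by (auto intro: DERIV_subset)
      moreover have "((\<lambda>u. integral {a..u} g) has_real_derivative g v) (at v within {a..b})"
        using integral_has_vector_derivative[OF gcab v] by (simp add: has_real_derivative_iff_has_vector_derivative)
      ultimately show ?thesis unfolding \<psi>_def using l
        by (auto intro!: derivative_eq_intros)
    qed
    have dle: "d v - (l * g v + 1/l)/4 \<le> 0" if v: "v \<in> {a..b}" for v
    proof -
      have gv: "g v \<ge> 0" using gnn v ab by auto
      have "0 \<le> (l * sqrt (g v) - 1)^2" by simp
      hence "2 * l * sqrt (g v) \<le> l^2 * g v + 1" using gv by (simp add: power2_eq_square algebra_simps)
      hence "sqrt (g v) / 2 \<le> (l * g v + 1/l)/4" using l by (simp add: field_simps power2_eq_square)
      thus ?thesis using bd[of v] v ab by auto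
    qed
    have "\<psi> b - \<psi> a \<le> 0"
    proof -
      have cont: "continuous_on {a..b} \<psi>"
        using dpsi by (meson DERIV_continuous continuous_at_imp_continuous_on continuous_on_eq_continuous_within)
      obtain z where z: "a < z" "z < b" "\<psi> b - \<psi> a = (\<lambda>h. (d z - (l * g z + 1/l)/4) * h) (b - a)"
      proof (rule mvt[OF ab(2) cont])
        fix x assume x: "a < x" "x < b"
        have "at x within {a..b} = at x" using x by (intro at_within_interior) auto
        thus "(\<psi> has_derivative (\<lambda>h. (d x - (l * g x + 1/l)/4) * h)) (at x)"
          using dpsi[of x] x by (simp add: has_field_derivative_def)
      qed
      thus ?thesis using dle[of z] ab z by (simp add: mult_nonpos_nonneg)
    qed
    moreover have "integral {a..a} g = 0" by simp
    moreover have "\<psi> b - \<psi> a = \<phi> b - \<phi> a - (l*I + (b-a)/l)/4"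
      unfolding \<psi>_def I_def by (simp add: diff_divide_distrib algebra_simps)
    moreover have "\<And>q r::real. q - r/4 \<le> 0 \<Longrightarrow> 2*q \<le> r/2" by linarith
    ultimately show ?thesis by metis
  qed
  have "2*(\<phi> b - \<phi> a) \<le> sqrt (I * (b-a))"
    by (rule amgm_sqrt) (use key I0 ab in auto)
  also have "\<dots> \<le> sqrt (integral {0..1} g * (b-a))" using II ab by (simp add: mult_right_mono)
  finally show ?thesis by (simp add: real_sqrt_mult)
qed




lemma vd_norm:
  fixes g :: "real \<Rightarrow> 'a::real_inner"
  assumes g: "(g has_vector_derivative g') (at t within S)" and nz: "g t \<noteq> 0"
  shows "((\<lambda>t. norm (g t)) has_real_derivative (g t \<bullet> g') / norm (g t)) (at t within S)"
proof -
  have "((\<lambda>t. norm (g t)) has_derivative (\<lambda>h. (h *\<^sub>R g') \<bullet> sgn (g t))) (at t within S)"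
    using has_derivative_compose[OF g[unfolded has_vector_derivative_def] has_derivative_norm[OF nz]]
    by simp
  moreover have "(\<lambda>h. (h *\<^sub>R g') \<bullet> sgn (g t)) = (*) ((g t \<bullet> g') / norm (g t))"
    by (auto simp: sgn_div_norm inner_commute field_simps)
  ultimately show ?thesis unfolding has_field_derivative_def by metis
qed

locale chom =
  fixes C :: "real \<times> real \<Rightarrow> real ^ 'n" and D :: "(real \<times> real) list \<Rightarrow> real \<times> real \<Rightarrow> real ^ 'n"
    and U :: "(real \<times> real) set"
  assumes D0: "D [] = C"
    and Dd: "\<And>ds x. x \<in> U \<Longrightarrow> (D ds has_derivative (\<lambda>h. D (h # ds) x)) (at x)"
    and dom: "UNIV \<times> {0..1} \<subseteq> U"
    and periodic: "\<And>\<theta> v. v \<in> {0..1} \<Longrightarrow> C (\<theta> + 2*pi, v) = C (\<theta>, v)"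
    and immersed: "\<And>\<theta> v. v \<in> {0..1} \<Longrightarrow> dth C \<theta> v \<noteq> 0"
begin

lemma inU: "v \<in> {0..1} \<Longrightarrow> (t, v) \<in> U" using dom by auto

lemma Dscale: "x \<in> U \<Longrightarrow> D ((c *\<^sub>R h) # ds) x = c *\<^sub>R D (h # ds) x"
  using has_derivative_bounded_linear[OF Dd] linear_simps(5) by blast

lemma Dth_shift:
  assumes "(t + c, v) \<in> U"
  shows "((\<lambda>t. D ds (t + c, v)) has_vector_derivative D ((1,0) # ds) (t + c, v)) (at t within S)"
proof -
  have p: "((\<lambda>t. (t + c, v)) has_derivative (\<lambda>h. (h, 0))) (at t within S)"
    by (auto intro!: derivative_eq_intros)
  have "((\<lambda>t. D ds (t + c, v)) has_derivative (\<lambda>h. D ((h, 0) # ds) (t + c, v))) (at t within S)"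
    using has_derivative_compose[OF p Dd[OF assms]] by simp
  moreover have "(\<lambda>h. D ((h, 0) # ds) (t + c, v)) = (\<lambda>h. h *\<^sub>R D ((1,0) # ds) (t + c, v))"
  proof
    fix h :: real
    have "(h, 0::real) = h *\<^sub>R (1, 0)" by simp
    thus "D ((h, 0) # ds) (t + c, v) = h *\<^sub>R D ((1,0) # ds) (t + c, v)"
      using Dscale[OF assms] by metis
  qed
  ultimately show ?thesis by (simp add: has_vector_derivative_def)
qed

lemma Dth:
  assumes "(t, v) \<in> U"
  shows "((\<lambda>t. D ds (t, v)) has_vector_derivative D ((1,0) # ds) (t, v)) (at t within S)"
  using Dth_shift[of t 0 v ds S] assms by simp

lemma Dv:
  assumes "(t, v) \<in> U"
  shows "((\<lambda>v. D ds (t, v)) has_vector_derivative D ((0,1) # ds) (t, v)) (at v within S)"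
proof -
  have p: "((\<lambda>v. (t, v)) has_derivative (\<lambda>h. (0, h))) (at v within S)"
    by (auto intro!: derivative_eq_intros)
  have "((\<lambda>v. D ds (t, v)) has_derivative (\<lambda>h. D ((0, h) # ds) (t, v))) (at v within S)"
    using has_derivative_compose[OF p Dd[OF assms]] by simp
  moreover have "(\<lambda>h. D ((0, h) # ds) (t, v)) = (\<lambda>h. h *\<^sub>R D ((0,1) # ds) (t, v))"
  proof
    fix h :: real
    have "(0::real, h) = h *\<^sub>R (0, 1)" by simp
    thus "D ((0, h) # ds) (t, v) = h *\<^sub>R D ((0,1) # ds) (t, v)"
      using Dscale[OF assms] by metis
  qed
  ultimately show ?thesis by (simp add: has_vector_derivative_def)
qed

lemma Dcont: "S \<subseteq> U \<Longrightarrow> continuous_on S (D ds)"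
  by (meson Dd continuous_at_imp_continuous_on has_derivative_continuous subsetD)

lemma Dcont2: "S \<subseteq> UNIV \<times> {0..1} \<Longrightarrow> continuous_on S (\<lambda>(t, v). D ds (t, v))"
  using Dcont[of S ds] dom by (simp add: case_prod_beta')

lemma Dcont_swap: "S \<subseteq> {0..1} \<times> UNIV \<Longrightarrow> continuous_on S (\<lambda>(v, t). D ds (t, v))"
proof -
  assume S: "S \<subseteq> {0..1} \<times> UNIV"
  have sub: "(\<lambda>x. (snd x, fst x)) ` S \<subseteq> U" using S dom by force
  have "continuous_on S (\<lambda>x. D ds (snd x, fst x))"
    by (rule continuous_on_compose2[OF Dcont[OF sub]]) (auto intro!: continuous_intros)
  thus ?thesis by (simp add: case_prod_beta')
qed

abbreviation "e1 \<equiv> (1::real, 0::real)"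
abbreviation "e2 \<equiv> (0::real, 1::real)"
abbreviation "A \<theta> v \<equiv> D [e1] (\<theta>, v)"
abbreviation "B \<theta> v \<equiv> D [e2] (\<theta>, v)"
abbreviation "A1 \<theta> v \<equiv> D [e1, e1] (\<theta>, v)"
abbreviation "A2 \<theta> v \<equiv> D [e2, e1] (\<theta>, v)"
abbreviation "B1 \<theta> v \<equiv> D [e1, e2] (\<theta>, v)"

lemma dth_eq: "v \<in> {0..1} \<Longrightarrow> dth C \<theta> v = A \<theta> v"
  unfolding dth_def using Dth[of \<theta> v "[]" UNIV] inU[of v \<theta>] D0
  by (simp add: vector_derivative_at)

lemma dv_eq: "v \<in> {0..1} \<Longrightarrow> dv C \<theta> v = B \<theta> v"
  unfolding dv_def using Dv[of \<theta> v "[]" UNIV] inU[of v \<theta>] D0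
  by (simp add: vector_derivative_at)

lemma Anz: "v \<in> {0..1} \<Longrightarrow> A \<theta> v \<noteq> 0"
  using immersed dth_eq by metis

end


context chom begin

abbreviation "T \<theta> v \<equiv> (1 / norm (A \<theta> v)) *\<^sub>R A \<theta> v"
abbreviation "Tp \<theta> v \<equiv> (1 / norm (A \<theta> v)) *\<^sub>R A1 \<theta> v - ((A \<theta> v \<bullet> A1 \<theta> v) / norm (A \<theta> v) ^ 3) *\<^sub>R A \<theta> v"

lemma A_der: "v \<in> {0..1} \<Longrightarrow> ((\<lambda>t. A t v) has_vector_derivative A1 \<theta> v) (at \<theta> within S)"
  using Dth[of \<theta> v "[e1]" S] inU by simp

lemma T_der:
  assumes v: "v \<in> {0..1}"
  shows "((\<lambda>t. T t v) has_vector_derivative Tp \<theta> v) (at \<theta> within S)"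
proof -
  note a = A_der[OF v, of \<theta> S]
  have nz: "norm (A \<theta> v) \<noteq> 0" using Anz[OF v] by simp
  have n: "((\<lambda>t. norm (A t v)) has_real_derivative (A \<theta> v \<bullet> A1 \<theta> v) / norm (A \<theta> v)) (at \<theta> within S)"
    using vd_norm[OF a Anz[OF v]] .
  have i: "((\<lambda>t. 1 / norm (A t v)) has_real_derivative - ((A \<theta> v \<bullet> A1 \<theta> v) / norm (A \<theta> v) ^ 3)) (at \<theta> within S)"
    using n nz by (auto intro!: derivative_eq_intros simp: power_def field_simps)
  show ?thesis using has_vector_derivative_scaleR[OF i a] by (simp add: algebra_simps)
qed

lemma tangent_eq: "v \<in> {0..1} \<Longrightarrow> tangent C \<theta> v = T \<theta> v"
  unfolding tangent_def using dth_eq by simp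

lemma curv_eq: "v \<in> {0..1} \<Longrightarrow> curv C \<theta> v = (1 / norm (A \<theta> v)) *\<^sub>R Tp \<theta> v"
proof -
  assume v: "v \<in> {0..1}"
  have "(\<lambda>t. tangent C t v) = (\<lambda>t. T t v)" using tangent_eq[OF v] by auto
  hence "vector_derivative (\<lambda>t. tangent C t v) (at \<theta>) = Tp \<theta> v"
    using T_der[OF v, of \<theta> UNIV] by (simp add: vector_derivative_at)
  thus ?thesis unfolding curv_def using dth_eq[OF v] by simp
qed

lemma Tp_orth: "v \<in> {0..1} \<Longrightarrow> Tp \<theta> v \<bullet> A \<theta> v = 0"
proof -
  assume v: "v \<in> {0..1}"
  have nz: "norm (A \<theta> v) \<noteq> 0" using Anz[OF v] by simp
  have e: "A \<theta> v \<bullet> A \<theta> v = norm (A \<theta> v) ^ 2" by (simp add: power2_norm_eq_inner)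
  have "Tp \<theta> v \<bullet> A \<theta> v = (A \<theta> v \<bullet> A1 \<theta> v) / norm (A \<theta> v)
      - ((A \<theta> v \<bullet> A1 \<theta> v) / norm (A \<theta> v) ^ 3) * (A \<theta> v \<bullet> A \<theta> v)"
    by (simp add: inner_diff_left inner_diff_right inner_commute)
  also have "\<dots> = 0" unfolding e using nz by (simp add: field_simps power_def)
  finally show ?thesis .
qed


lemma Dcont_t: "v \<in> {0..1} \<Longrightarrow> continuous_on S (\<lambda>t. D ds (t, v))"
  by (rule continuous_on_compose2[OF Dcont[of "UNIV \<times> {0..1}"]]) (use dom in \<open>auto intro!: continuous_intros\<close>)

lemma Dcont_v: "S \<subseteq> {0..1} \<Longrightarrow> continuous_on S (\<lambda>v. D ds (t, v))"
  by (rule continuous_on_compose2[OF Dcont[of "UNIV \<times> {0..1}"]]) (use dom in \<open>auto intro!: continuous_intros\<close>)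

lemma sym2:
  assumes v: "v \<in> {0..1}" and th: "\<theta> \<in> {0..2*pi}"
  shows "A2 \<theta> v = B1 \<theta> v"
proof -
  have eqI: "integral {0..x} (\<lambda>t. A2 t v) = integral {0..x} (\<lambda>t. B1 t v)" if x: "x \<in> {0..2*pi}" for x
  proof -
    have x0: "0 \<le> x" using x by auto
    have "((\<lambda>t. B1 t v) has_integral (B x v - B 0 v)) {0..x}"
      by (rule fundamental_theorem_of_calculus[OF x0]) (rule Dth[OF inU[OF v]])
    hence Q: "integral {0..x} (\<lambda>t. B1 t v) = B x v - B 0 v" by (rule integral_unique)
    have Cint: "integral {0..x} (\<lambda>t. A t s) = C (x, s) - C (0, s)" if s: "s \<in> {0..1}" for s
    proof -
      have "((\<lambda>t. A t s) has_integral (D [] (x, s) - D [] (0, s))) {0..x}"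
        by (rule fundamental_theorem_of_calculus[OF x0]) (rule Dth[OF inU[OF s]])
      thus ?thesis using D0 by (simp add: integral_unique)
    qed
    have L: "((\<lambda>s. integral (cbox 0 x) (\<lambda>t. A t s)) has_vector_derivative integral (cbox 0 x) (\<lambda>t. A2 t v)) (at v within {0..1})"
    proof (rule leibniz_rule_vector_derivative[where f="\<lambda>s t. A t s" and fx="\<lambda>s t. A2 t s"])
      show "\<And>s t. s \<in> {0..1} \<Longrightarrow> t \<in> cbox 0 x \<Longrightarrow> ((\<lambda>s. A t s) has_vector_derivative A2 t s) (at s within {0..1})"
        using Dv inU by blast
      show "\<And>s. s \<in> {0..1} \<Longrightarrow> (\<lambda>t. A t s) integrable_on cbox 0 x"
        by (rule integrable_continuous) (rule Dcont_t)
      show "continuous_on ({0..1} \<times> cbox 0 x) (\<lambda>(s, t). A2 t s)"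
        by (rule Dcont_swap) auto
    qed (use v in auto)
    have G: "((\<lambda>s. C (x, s) - C (0, s)) has_vector_derivative (B x v - B 0 v)) (at v within {0..1})"
      using has_vector_derivative_diff[OF Dv[of x v "[]" "{0..1}", OF inU[OF v]] Dv[of 0 v "[]" "{0..1}", OF inU[OF v]]] D0 by simp
    have L2: "((\<lambda>s. C (x, s) - C (0, s)) has_vector_derivative integral {0..x} (\<lambda>t. A2 t v)) (at v within {0..1})"
      by (rule has_vector_derivative_transform[OF v _ L[unfolded cbox_interval]]) (simp add: Cint)
    have "integral {0..x} (\<lambda>t. A2 t v) = B x v - B 0 v"
      by (rule vector_derivative_unique_within_closed_interval[of 0 1 v]) (use v L2 G in \<open>auto simp: cbox_interval\<close>)
    thus ?thesis using Q by simp
  qed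
  have c1: "continuous_on {0..2*pi} (\<lambda>t. A2 t v)" by (rule Dcont_t[OF v])
  have c2: "continuous_on {0..2*pi} (\<lambda>t. B1 t v)" by (rule Dcont_t[OF v])
  have P1: "((\<lambda>x. integral {0..x} (\<lambda>t. B1 t v)) has_vector_derivative A2 \<theta> v) (at \<theta> within {0..2*pi})"
    by (rule has_vector_derivative_transform[OF th _ integral_has_vector_derivative[OF c1 th]]) (simp add: eqI)
  show ?thesis
    by (rule vector_derivative_unique_within_closed_interval[of 0 "2*pi" \<theta>])
       (use th P1 integral_has_vector_derivative[OF c2 th] in \<open>auto simp: cbox_interval\<close>)
qed

end


context chom begin

lemma perA: "v \<in> {0..1} \<Longrightarrow> A (2*pi) v = A 0 v"
proof -
  assume v: "v \<in> {0..1}"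
  have "((\<lambda>t. D [] (t + 2*pi, v)) has_vector_derivative A (0 + 2*pi) v) (at 0)"
    using Dth_shift[of 0 "2*pi" v "[]" UNIV] inU[OF v] by simp
  moreover have "(\<lambda>t. D [] (t + 2*pi, v)) = (\<lambda>t. D [] (t, v))" using periodic[OF v] D0 by auto
  ultimately have "((\<lambda>t. D [] (t, v)) has_vector_derivative A (2*pi) v) (at 0)" by simp
  moreover have "((\<lambda>t. D [] (t, v)) has_vector_derivative A 0 v) (at 0)"
    using Dth[of 0 v "[]" UNIV] inU[OF v] by simp
  ultimately show ?thesis by (rule vector_derivative_unique_at)
qed

lemma perB: "v \<in> {0..1} \<Longrightarrow> B (2*pi) v = B 0 v"
proof -
  assume v: "v \<in> {0..1}"
  have "((\<lambda>s. D [] (2*pi, s)) has_vector_derivative B (2*pi) v) (at v within {0..1})"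
    using Dv[of "2*pi" v "[]" "{0..1}"] inU[OF v] by simp
  hence "((\<lambda>s. D [] (0, s)) has_vector_derivative B (2*pi) v) (at v within {0..1})"
    by (rule has_vector_derivative_transform[OF v, rotated]) (use periodic[of _ 0] D0 in simp)
  moreover have "((\<lambda>s. D [] (0, s)) has_vector_derivative B 0 v) (at v within {0..1})"
    using Dv[of 0 v "[]" "{0..1}"] inU[OF v] by simp
  ultimately show ?thesis
    by (intro vector_derivative_unique_within_closed_interval[of 0 1 v]) (use v in \<open>auto simp: cbox_interval\<close>)
qed

lemma Dcont_sw: "S \<subseteq> {0..1} \<times> UNIV \<Longrightarrow> continuous_on S (\<lambda>p. D ds (snd p, fst p))"
  using Dcont_swap[of S ds] by (simp add: case_prod_beta')

lemma T_cont: "v \<in> {0..1} \<Longrightarrow> continuous_on S (\<lambda>t. T t v)"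
  by (auto intro!: continuous_intros Dcont_t simp: Anz)

lemma Tp_cont: "v \<in> {0..1} \<Longrightarrow> continuous_on S (\<lambda>t. Tp t v)"
  by (auto intro!: continuous_intros Dcont_t simp: Anz)

lemma ibp:
  assumes v: "v \<in> {0..1}"
  shows "integral {0..2*pi} (\<lambda>\<theta>. T \<theta> v \<bullet> B1 \<theta> v) = - integral {0..2*pi} (\<lambda>\<theta>. Tp \<theta> v \<bullet> B \<theta> v)"
proof -
  have "((\<lambda>\<theta>. T \<theta> v \<bullet> B1 \<theta> v + Tp \<theta> v \<bullet> B \<theta> v) has_integral
          (T (2*pi) v \<bullet> B (2*pi) v - T 0 v \<bullet> B 0 v)) {0..2*pi}"
  proof (rule fundamental_theorem_of_calculus)
    fix x assume x: "x \<in> {0..2*pi}"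
    show "((\<lambda>\<theta>. T \<theta> v \<bullet> B \<theta> v) has_vector_derivative T x v \<bullet> B1 x v + Tp x v \<bullet> B x v) (at x within {0..2*pi})"
      using bounded_bilinear.has_vector_derivative[OF bounded_bilinear_inner T_der[OF v] Dth[of x v "[e2]" "{0..2*pi}", OF inU[OF v]]] .
  qed simp
  hence "integral {0..2*pi} (\<lambda>\<theta>. T \<theta> v \<bullet> B1 \<theta> v + Tp \<theta> v \<bullet> B \<theta> v) = 0"
    using perA[OF v] perB[OF v] by (simp add: integral_unique)
  moreover have "integral {0..2*pi} (\<lambda>\<theta>. T \<theta> v \<bullet> B1 \<theta> v + Tp \<theta> v \<bullet> B \<theta> v)
     = integral {0..2*pi} (\<lambda>\<theta>. T \<theta> v \<bullet> B1 \<theta> v) + integral {0..2*pi} (\<lambda>\<theta>. Tp \<theta> v \<bullet> B \<theta> v)"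
    by (intro integral_add integrable_continuous_real continuous_intros T_cont Tp_cont Dcont_t v)
  ultimately show ?thesis by simp
qed

lemma len_eq: "v \<in> {0..1} \<Longrightarrow> len C v = integral {0..2*pi} (\<lambda>\<theta>. norm (A \<theta> v))"
  unfolding len_def using dth_eq by simp

lemma len_der:
  assumes v: "v \<in> {0..1}"
  shows "((\<lambda>s. len C s) has_real_derivative integral {0..2*pi} (\<lambda>\<theta>. T \<theta> v \<bullet> A2 \<theta> v)) (at v within {0..1})"
proof -
  have L: "((\<lambda>s. integral (cbox 0 (2*pi)) (\<lambda>\<theta>. norm (A \<theta> s))) has_real_derivative
      integral (cbox 0 (2*pi)) (\<lambda>\<theta>. T \<theta> v \<bullet> A2 \<theta> v)) (at v within {0..1})"
  proof (rule leibniz_rule_field_derivative[where f="\<lambda>s \<theta>. norm (A \<theta> s)" and fx="\<lambda>s \<theta>. T \<theta> s \<bullet> A2 \<theta> s"])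
    fix s t :: real assume s: "s \<in> {0..1}" and t: "t \<in> cbox 0 (2*pi)"
    show "((\<lambda>s. norm (A t s)) has_real_derivative T t s \<bullet> A2 t s) (at s within {0..1})"
      using vd_norm[OF Dv[of t s "[e1]" "{0..1}", OF inU[OF s]] Anz[OF s]]
      by (simp add: inner_scaleR_left)
  next
    fix s :: real assume s: "s \<in> {0..1}"
    show "(\<lambda>\<theta>. norm (A \<theta> s)) integrable_on cbox 0 (2*pi)"
      by (intro integrable_continuous continuous_intros Dcont_t s)
  next
    have "continuous_on ({0..1} \<times> cbox 0 (2*pi))
        (\<lambda>p. T (snd p) (fst p) \<bullet> A2 (snd p) (fst p))"
      by (auto intro!: continuous_intros Dcont_sw simp: Anz)
    thus "continuous_on ({0..1} \<times> cbox 0 (2*pi)) (\<lambda>(s, \<theta>). T \<theta> s \<bullet> A2 \<theta> s)"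
      by (simp add: case_prod_beta')
  qed (use v in auto)
  show ?thesis
    by (rule has_field_derivative_transform_within[OF L[unfolded cbox_interval] zero_less_one v])
       (simp add: len_eq)
qed

end



lemma amgm_pt:
  fixes p n l :: real
  assumes n: "n > 0" and l: "l > 0"
  shows "abs p \<le> l/2 * (p^2 / n) + 1/(2*l) * n"
proof -
  have "0 \<le> (l * abs p - n)^2" by simp
  hence "2*l*n*abs p \<le> l^2 * p^2 + n^2"
    by (simp add: power2_eq_square algebra_simps abs_mult_self_eq)
  hence "abs p \<le> (l^2 * p^2 + n^2) / (2*l*n)" using n l by (simp add: field_simps)
  also have "\<dots> = l/2 * (p^2 / n) + 1/(2*l) * n" using n l by (simp add: field_simps power2_eq_square)
  finally show ?thesis .
qed

context chom begin

lemma len_pos: "v \<in> {0..1} \<Longrightarrow> len C v > 0"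
proof -
  assume v: "v \<in> {0..1}"
  have c: "continuous_on {0..2*pi} (\<lambda>\<theta>. norm (A \<theta> v))" by (intro continuous_intros Dcont_t v)
  obtain t0 where t0: "t0 \<in> {0..2*pi}" "\<And>y. y \<in> {0..2*pi} \<Longrightarrow> norm (A t0 v) \<le> norm (A y v)"
    using continuous_attains_inf[OF compact_Icc _ c] by auto
  have m: "norm (A t0 v) > 0" using Anz[OF v] by simp
  have "integral {0..2*pi} (\<lambda>\<theta>. norm (A t0 v)) \<le> integral {0..2*pi} (\<lambda>\<theta>. norm (A \<theta> v))"
    by (rule integral_le) (use t0 c integrable_continuous_real in auto)
  moreover have "integral {0..2*pi} (\<lambda>\<theta>. norm (A t0 v)) = 2*pi * norm (A t0 v)"
    by (simp add: integral_const_real)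
  ultimately show ?thesis using m len_eq[OF v] by (smt (verit) mult_pos_pos pi_gt_zero)
qed

definition "Lp v = - integral {0..2*pi} (\<lambda>\<theta>. Tp \<theta> v \<bullet> B \<theta> v)"

lemma len_der2: "v \<in> {0..1} \<Longrightarrow> ((\<lambda>s. len C s) has_real_derivative Lp v) (at v within {0..1})"
proof -
  assume v: "v \<in> {0..1}"
  have "integral {0..2*pi} (\<lambda>\<theta>. T \<theta> v \<bullet> A2 \<theta> v) = integral {0..2*pi} (\<lambda>\<theta>. T \<theta> v \<bullet> B1 \<theta> v)"
    by (rule integral_cong) (simp add: sym2[OF v])
  thus ?thesis using len_der[OF v] ibp[OF v] unfolding Lp_def by simp
qed

definition "fq v = integral {0..2*pi} (\<lambda>\<theta>. (inner (curv C \<theta> v) (dv C \<theta> v))\<^sup>2 * norm (dth C \<theta> v))"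

lemma fq_eq: "v \<in> {0..1} \<Longrightarrow> fq v = integral {0..2*pi} (\<lambda>\<theta>. (Tp \<theta> v \<bullet> B \<theta> v)^2 / norm (A \<theta> v))"
  unfolding fq_def
proof (rule integral_cong)
  fix \<theta> assume v: "v \<in> {0..1}"
  have nz: "norm (A \<theta> v) \<noteq> 0" using Anz[OF v] by simp
  have e: "curv C \<theta> v \<bullet> dv C \<theta> v = (Tp \<theta> v \<bullet> B \<theta> v) / norm (A \<theta> v)"
    unfolding curv_eq[OF v] dv_eq[OF v] by (simp only: inner_scaleR_left) simp
  have g: "\<And>x n::real. n \<noteq> 0 \<Longrightarrow> (x/n)^2 * n = x^2/n" by (simp add: power2_eq_square)
  show "(curv C \<theta> v \<bullet> dv C \<theta> v)\<^sup>2 * norm (dth C \<theta> v) = (Tp \<theta> v \<bullet> B \<theta> v)^2 / norm (A \<theta> v)"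
    unfolding e dth_eq[OF v] by (rule g[OF nz])
qed

lemma CS: "v \<in> {0..1} \<Longrightarrow> abs (Lp v) \<le> sqrt (fq v * len C v)"
proof -
  assume v: "v \<in> {0..1}"
  define p where "p = (\<lambda>\<theta>. Tp \<theta> v \<bullet> B \<theta> v)"
  define n where "n = (\<lambda>\<theta>. norm (A \<theta> v))"
  have npos: "n \<theta> > 0" for \<theta> using Anz[OF v] by (simp add: n_def)
  have ip: "p integrable_on {0..2*pi}" unfolding p_def
    by (intro integrable_continuous_real continuous_intros Tp_cont Dcont_t v)
  have iq: "(\<lambda>\<theta>. p \<theta>^2 / n \<theta>) integrable_on {0..2*pi}" unfolding p_def n_def
    by (intro integrable_continuous_real continuous_intros Tp_cont Dcont_t v) (simp add: Anz[OF v])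
  have inn: "n integrable_on {0..2*pi}" unfolding n_def
    by (intro integrable_continuous_real continuous_intros Dcont_t v)
  have fqe: "fq v = integral {0..2*pi} (\<lambda>\<theta>. p \<theta>^2 / n \<theta>)" using fq_eq[OF v] by (simp add: p_def n_def)
  have le: "len C v = integral {0..2*pi} n" using len_eq[OF v] by (simp add: n_def)
  have key: "abs (Lp v) \<le> (l * fq v + len C v / l) / 2" if l: "l > 0" for l
  proof -
    have i1: "(\<lambda>\<theta>. l/2 * (p \<theta>^2 / n \<theta>)) integrable_on {0..2*pi}"
      using integrable_cmul[OF iq, of "l/2"] by simp
    have i2: "(\<lambda>\<theta>. 1/(2*l) * n \<theta>) integrable_on {0..2*pi}"
      using integrable_cmul[OF inn, of "1/(2*l)"] by simp
    have "norm (integral {0..2*pi} p) \<le> integral {0..2*pi} (\<lambda>\<theta>. l/2 * (p \<theta>^2 / n \<theta>) + 1/(2*l) * n \<theta>)"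
      by (rule integral_norm_bound_integral[OF ip integrable_add[OF i1 i2]])
         (simp only: real_norm_def amgm_pt[OF npos l])
    also have "\<dots> = integral {0..2*pi} (\<lambda>\<theta>. l/2 * (p \<theta>^2 / n \<theta>)) + integral {0..2*pi} (\<lambda>\<theta>. 1/(2*l) * n \<theta>)"
      by (rule integral_add[OF i1 i2])
    also have "\<dots> = l/2 * fq v + 1/(2*l) * len C v"
      by (simp only: integral_mult[OF iq, symmetric] integral_mult[OF inn, symmetric] fqe[symmetric] le[symmetric])
    finally show ?thesis unfolding Lp_def p_def using l by (simp add: field_simps)
  qed
  have "0 \<le> fq v" unfolding fqe
    by (rule integral_nonneg[OF iq]) (use npos in \<open>auto intro!: divide_nonneg_pos\<close>)
  moreover have "0 \<le> len C v" using len_pos[OF v] by simp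
  ultimately show ?thesis using amgm_sqrt[of "abs (Lp v)" "fq v" "len C v"] key by blast
qed

end


context chom begin

abbreviation "K \<theta> v \<equiv> (1 / norm (A \<theta> v)) *\<^sub>R Tp \<theta> v"
abbreviation "PN \<theta> v \<equiv> B \<theta> v - (B \<theta> v \<bullet> T \<theta> v) *\<^sub>R T \<theta> v"
abbreviation "HH \<theta> v \<equiv> (norm (K \<theta> v))\<^sup>2 * (norm (PN \<theta> v))\<^sup>2 * norm (A \<theta> v)"

lemma pt_le: "v \<in> {0..1} \<Longrightarrow> (Tp \<theta> v \<bullet> B \<theta> v)^2 / norm (A \<theta> v) \<le> HH \<theta> v"
proof -
  assume v: "v \<in> {0..1}"
  define n where "n = norm (A \<theta> v)"
  have n: "n > 0" using Anz[OF v] by (simp add: n_def)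
  have KT: "K \<theta> v \<bullet> T \<theta> v = 0" using Tp_orth[OF v] by simp
  have "K \<theta> v \<bullet> PN \<theta> v = K \<theta> v \<bullet> B \<theta> v - (B \<theta> v \<bullet> T \<theta> v) * (K \<theta> v \<bullet> T \<theta> v)"
    by (simp only: inner_diff_right inner_scaleR_right)
  hence "K \<theta> v \<bullet> PN \<theta> v = K \<theta> v \<bullet> B \<theta> v" using KT by simp
  also have "K \<theta> v \<bullet> B \<theta> v = (Tp \<theta> v \<bullet> B \<theta> v) / n"
    unfolding n_def by (simp only: inner_scaleR_left) simp
  finally have e: "Tp \<theta> v \<bullet> B \<theta> v = n * (K \<theta> v \<bullet> PN \<theta> v)" using n by simp
  have "(K \<theta> v \<bullet> PN \<theta> v)^2 \<le> (norm (K \<theta> v) * norm (PN \<theta> v))^2"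
    using Cauchy_Schwarz_ineq2[of "K \<theta> v" "PN \<theta> v"]
    by (metis abs_ge_zero power2_abs power_mono)
  hence le: "(K \<theta> v \<bullet> PN \<theta> v)^2 * n \<le> (norm (K \<theta> v) * norm (PN \<theta> v))^2 * n"
    using n by (simp add: mult_right_mono)
  have "(Tp \<theta> v \<bullet> B \<theta> v)^2 / n = (K \<theta> v \<bullet> PN \<theta> v)^2 * n"
    unfolding e using n by (simp add: power2_eq_square)
  also note le
  also have "(norm (K \<theta> v) * norm (PN \<theta> v))^2 * n = HH \<theta> v"
    unfolding n_def by (simp only: power_mult_distrib)
  finally show ?thesis by (simp only: n_def)
qed

lemma fq_le: "v \<in> {0..1} \<Longrightarrow> fq v \<le> integral {0..2*pi} (\<lambda>\<theta>. HH \<theta> v)"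
proof -
  assume v: "v \<in> {0..1}"
  show ?thesis unfolding fq_eq[OF v]
  proof (rule integral_le)
    show "(\<lambda>\<theta>. (Tp \<theta> v \<bullet> B \<theta> v)^2 / norm (A \<theta> v)) integrable_on {0..2*pi}"
      using v by (auto intro!: integrable_continuous_real continuous_intros Tp_cont Dcont_t simp: Anz)
    show "(\<lambda>\<theta>. HH \<theta> v) integrable_on {0..2*pi}"
      using v by (auto intro!: integrable_continuous_real continuous_intros Tp_cont Dcont_t simp: Anz)
  qed (rule pt_le[OF v])
qed

definition "gg v = integral {0..2*pi} (\<lambda>\<theta>. HH \<theta> v)"

lemma gg_nn: "v \<in> {0..1} \<Longrightarrow> gg v \<ge> 0"
  unfolding gg_def by (rule integral_nonneg) (auto intro!: integrable_continuous_real continuous_intros Tp_cont Dcont_t simp: Anz)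

lemma Dcont_p: "S \<subseteq> UNIV \<times> {0..1} \<Longrightarrow> continuous_on S (\<lambda>p. D ds (fst p, snd p))"
  using Dcont2[of S ds] by (simp add: case_prod_beta')

lemma gg_cont: "continuous_on {0..1} gg"
proof -
  have "continuous_on ({0..1} \<times> cbox 0 (2*pi)) (\<lambda>p. HH (snd p) (fst p))"
    by (auto intro!: continuous_intros Dcont_sw simp: Anz)
  hence "continuous_on ({0..1} \<times> cbox 0 (2*pi)) (\<lambda>(v, \<theta>). HH \<theta> v)"
    by (simp add: case_prod_beta')
  from integral_continuous_on_param[OF this] show ?thesis
    unfolding gg_def by (simp add: cbox_interval)
qed

lemma HH_cont: "continuous_on (cbox (0, 0) (2*pi, 1)) (\<lambda>(\<theta>, v). HH \<theta> v)"
proof -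
  have "continuous_on (cbox (0, 0) (2*pi, 1)) (\<lambda>p. HH (fst p) (snd p))"
  proof -
    have sub: "cbox (0, 0) (2*pi, 1::real) \<subseteq> UNIV \<times> {0..1}"
      by (simp only: cbox_Pair_eq) (auto simp: cbox_interval)
    have nz: "\<And>x. x \<in> cbox (0, 0) (2*pi, 1::real) \<Longrightarrow> A (fst x) (snd x) \<noteq> 0"
      using sub Anz by auto
    show ?thesis by (intro continuous_intros Dcont_p[OF sub]) (use nz in auto)
  qed
  thus ?thesis by (simp add: case_prod_beta')
qed

lemma Jfun_eq: "Jfun C = integral {0..1} gg"
proof -
  have "Jfun C = integral (cbox (0, 0) (2*pi, 1)) (\<lambda>(\<theta>, v). HH \<theta> v)"
  proof -
  have sq: "{0..2*pi} \<times> {0..1} = cbox (0, 0) (2*pi, 1::real)"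
    by (simp only: cbox_Pair_eq) (simp add: cbox_interval)
  show ?thesis unfolding Jfun_def sq
  proof (rule integral_cong)
    fix x assume x: "x \<in> cbox (0, 0) (2*pi, 1::real)"
    obtain \<theta> v where tv: "x = (\<theta>, v)" by fastforce
    have v: "v \<in> {0..1}" using x tv by (simp add: cbox_Pair_iff cbox_interval)
    show "(case x of (\<theta>, v) \<Rightarrow> (norm (curv C \<theta> v))\<^sup>2 * (norm (normal_proj C \<theta> v (dv C \<theta> v)))\<^sup>2 * norm (dth C \<theta> v))
        = (case x of (\<theta>, v) \<Rightarrow> HH \<theta> v)"
      unfolding tv normal_proj_def by (simp add: curv_eq[OF v] dv_eq[OF v] dth_eq[OF v] tangent_eq[OF v])
  qed
  qed
  also have "\<dots> = integral (cbox 0 (2*pi)) (\<lambda>\<theta>. integral (cbox 0 1) (\<lambda>v. HH \<theta> v))"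
    using integral_prod_continuous[OF HH_cont] by simp
  also have "\<dots> = integral (cbox 0 1) (\<lambda>v. integral (cbox 0 (2*pi)) (\<lambda>\<theta>. HH \<theta> v))"
    by (rule integral_swap_continuous[where f="\<lambda>\<theta> v. HH \<theta> v"]) (use HH_cont in simp)
  finally show ?thesis unfolding gg_def by (simp add: cbox_interval)
qed

end



lemma div_bound:
  fixes s x a :: real
  assumes s: "s > 0" and h: "abs x \<le> a * s"
  shows "abs (inverse s / 2 * x) \<le> a / 2"
proof -
  have "abs (inverse s / 2 * x) = abs x / (2 * s)" using s by (simp add: abs_mult field_simps)
  also have "\<dots> \<le> a * s / (2 * s)" by (rule divide_right_mono) (use h s in auto)
  also have "\<dots> = a / 2" using s by simp
  finally show ?thesis .
qed

context chom begin

definition "dd v = inverse (sqrt (len C v)) / 2 * Lp v"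

lemma dd_der: "v \<in> {0..1} \<Longrightarrow> ((\<lambda>s. sqrt (len C s)) has_real_derivative dd v) (at v within {0..1})"
  unfolding dd_def using DERIV_chain2[OF DERIV_real_sqrt[OF len_pos] len_der2] by simp

lemma dd_bound: "v \<in> {0..1} \<Longrightarrow> abs (dd v) \<le> sqrt (fq v) / 2"
proof -
  assume v: "v \<in> {0..1}"
  have "abs (Lp v) \<le> sqrt (fq v) * sqrt (len C v)" using CS[OF v] by (simp add: real_sqrt_mult)
  thus ?thesis unfolding dd_def by (rule div_bound[rotated]) (use len_pos[OF v] in simp)
qed

lemma dd_bound2: "v \<in> {0..1} \<Longrightarrow> abs (dd v) \<le> sqrt (gg v) / 2"
proof -
  assume v: "v \<in> {0..1}"
  have "sqrt (fq v) \<le> sqrt (gg v)" using fq_le[OF v] unfolding gg_def by simp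
  thus ?thesis using dd_bound[OF v] by linarith
qed

lemma main_ctx:
  shows "(\<forall>v\<in>{0..1}. \<exists>D. ((\<lambda>s. sqrt (len C s)) has_real_derivative D) (at v within {0..1}) \<and>
            D \<le> 1/2 * sqrt (integral {0..2*pi}
                   (\<lambda>\<theta>. (inner (curv C \<theta> v) (dv C \<theta> v))\<^sup>2 * norm (dth C \<theta> v))))
       \<and> (\<forall>v' v''. 0 \<le> v' \<and> v' < v'' \<and> v'' \<le> 1 \<longrightarrow>
            sqrt (len C v'') - sqrt (len C v') \<le> sqrt (Jfun C) / 2 * sqrt (v'' - v'))
       \<and> (\<exists>K. \<forall>v'\<in>{0..1}. \<forall>v''\<in>{0..1}.
            \<bar>sqrt (len C v'') - sqrt (len C v')\<bar> \<le> K * sqrt \<bar>v'' - v'\<bar>)"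
proof (intro conjI)
  show "\<forall>v\<in>{0..1}. \<exists>D. ((\<lambda>s. sqrt (len C s)) has_real_derivative D) (at v within {0..1}) \<and>
            D \<le> 1/2 * sqrt (integral {0..2*pi}
                   (\<lambda>\<theta>. (inner (curv C \<theta> v) (dv C \<theta> v))\<^sup>2 * norm (dth C \<theta> v)))"
  proof
    fix v :: real assume v: "v \<in> {0..1}"
    show "\<exists>D. ((\<lambda>s. sqrt (len C s)) has_real_derivative D) (at v within {0..1}) \<and>
            D \<le> 1/2 * sqrt (integral {0..2*pi}
                   (\<lambda>\<theta>. (inner (curv C \<theta> v) (dv C \<theta> v))\<^sup>2 * norm (dth C \<theta> v)))"
      using dd_der[OF v] dd_bound[OF v] unfolding fq_def by force
  qed
  have up: "sqrt (len C b) - sqrt (len C a) \<le> sqrt (Jfun C) / 2 * sqrt (b - a)"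
    if ab: "0 \<le> a" "a < b" "b \<le> 1" for a b
    using holder_gen[of "\<lambda>s. sqrt (len C s)" dd gg a b, OF dd_der _ gg_cont gg_nn ab] dd_bound2
    unfolding Jfun_eq by force
  have down: "sqrt (len C a) - sqrt (len C b) \<le> sqrt (Jfun C) / 2 * sqrt (b - a)"
    if ab: "0 \<le> a" "a < b" "b \<le> 1" for a b
  proof -
    have "(- sqrt (len C b)) - (- sqrt (len C a)) \<le> sqrt (integral {0..1} gg) / 2 * sqrt (b - a)"
    proof (rule holder_gen[of "\<lambda>s. - sqrt (len C s)" "\<lambda>v. - dd v" gg a b, OF _ _ gg_cont gg_nn ab])
      fix v :: real assume v: "v \<in> {0..1}"
      show "((\<lambda>s. - sqrt (len C s)) has_real_derivative - dd v) (at v within {0..1})"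
        using DERIV_minus[OF dd_der[OF v]] .
      show "- dd v \<le> sqrt (gg v) / 2" using dd_bound2[OF v] by linarith
    qed
    thus ?thesis unfolding Jfun_eq by simp
  qed
  show "\<forall>v' v''. 0 \<le> v' \<and> v' < v'' \<and> v'' \<le> 1 \<longrightarrow>
            sqrt (len C v'') - sqrt (len C v') \<le> sqrt (Jfun C) / 2 * sqrt (v'' - v')"
    using up by blast
  show "\<exists>K. \<forall>v'\<in>{0..1}. \<forall>v''\<in>{0..1}.
            \<bar>sqrt (len C v'') - sqrt (len C v')\<bar> \<le> K * sqrt \<bar>v'' - v'\<bar>"
  proof (intro exI ballI)
    fix v' v'' :: real assume a: "v' \<in> {0..1}" and b: "v'' \<in> {0..1}"
    consider "v' < v''" | "v' = v''" | "v'' < v'" by linarith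
    thus "\<bar>sqrt (len C v'') - sqrt (len C v')\<bar> \<le> sqrt (Jfun C) / 2 * sqrt \<bar>v'' - v'\<bar>"
    proof cases
      case 1
      have s: "\<bar>v'' - v'\<bar> = v'' - v'" using 1 by simp
      show ?thesis unfolding s by (rule abs_leI) (use up[of v' v''] down[of v' v''] a b 1 in auto)
    next
      case 2
      thus ?thesis by simp
    next
      case 3
      have s: "\<bar>v'' - v'\<bar> = v' - v''" using 3 by simp
      show ?thesis unfolding s by (rule abs_leI) (use up[of v'' v'] down[of v'' v'] a b 3 in auto)
    qed
  qed
qed

end

theorem mainTheorem6:
  fixes C :: "real \<times> real \<Rightarrow> real ^ 'n" and U :: "(real \<times> real) set"
  assumes smooth: "smooth_on U C"
    and dom: "UNIV \<times> {0..1} \<subseteq> U"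
    and periodic: "\<And>\<theta> v. v \<in> {0..1} \<Longrightarrow> C (\<theta> + 2*pi, v) = C (\<theta>, v)"
    and immersed: "\<And>\<theta> v. v \<in> {0..1} \<Longrightarrow> dth C \<theta> v \<noteq> 0"
  shows "(\<forall>v\<in>{0..1}. \<exists>D. ((\<lambda>s. sqrt (len C s)) has_real_derivative D) (at v within {0..1}) \<and>
            D \<le> 1/2 * sqrt (integral {0..2*pi}
                   (\<lambda>\<theta>. (inner (curv C \<theta> v) (dv C \<theta> v))\<^sup>2 * norm (dth C \<theta> v))))
       \<and> (\<forall>v' v''. 0 \<le> v' \<and> v' < v'' \<and> v'' \<le> 1 \<longrightarrow>
            sqrt (len C v'') - sqrt (len C v') \<le> sqrt (Jfun C) / 2 * sqrt (v'' - v'))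
       \<and> (\<exists>K. \<forall>v'\<in>{0..1}. \<forall>v''\<in>{0..1}.
            \<bar>sqrt (len C v'') - sqrt (len C v')\<bar> \<le> K * sqrt \<bar>v'' - v'\<bar>)"
proof -
  obtain D :: "(real \<times> real) list \<Rightarrow> real \<times> real \<Rightarrow> real ^ 'n" where
    D0: "D [] = C" and Dd: "\<forall>ds. \<forall>x\<in>U. (D ds has_derivative (\<lambda>h. D (h # ds) x)) (at x)"
    using smooth unfolding smooth_on_def by blast
  interpret chom C D U
    by (unfold_locales) (use D0 Dd dom periodic immersed in auto)
  show ?thesis by (rule main_ctx)
qed



end
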